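(* Let $\lambda$ be a partition, $n\ge\ell(\lambda)$, and $M\in\mathrm{MLQ}(\lambda,n)$. Then $\operatorname{maj}(M)=\operatorname{charge}(\mathrm{cw}(M))$.
   Context: For a partition $\lambda$, $\lambda'$ is the conjugate partition. For $L=\lambda_1$ and $n\ge\ell(\lambda)$, $\mathrm{MLQ}(\lambda,n)$ is the set of tuples $M=(B_1,\dots,B_L)$ of subsets of $[n]$ with $|B_j|=\lambda'_j$, drawn as an $L\times n$ grid with rows $1..L$ bottom to top, columns $1..n$ left to right, a ball in cell $(r,j)$ iff $j\in B_r$. The column word $\mathrm{cw}(M)$ scans columns left to right and, within each column, top to bottom, recording the row number of each ball (so it has content $\lambda'$). Major index (Ferrari–Martin labelling). For $r=L,\dots,2$: every unlabelled ball of row $r$ gets label $r$; then the balls of row $r$, in decreasing label order (left to right among equal labels), are each paired with the first unlabelled ball of row $r-1$ weakly to the right, scanning cyclically ($j,j+1,\dots,n,1,\dots$); that ball gets the same label; the pairing wraps if the lower ball is in a column strictly left of the upper ball. Unlabelled balls in row 1 get label 1. $\operatorname{maj}(M)=\sum(\ell(p)-r(p)+1)$ over wrapping pairings $p$, $r(p)$ the row of the upper ball, $\ell(p)$ its label. Charge. For a permutation $\tau$ of $[m]$ in one-line notation, $\operatorname{charge}(\tau)=\sum(m-i)$ over $i\in[m-1]$ such that $i$ is to the left of $i+1$. For a word $w$ with letters $1,\dots,k$ whose multiplicities are weakly decreasing ($\#1\ge\#2\ge\cdots$), extract the first charge subword by locating the leftmost occurrence of $k$, then the next occurrence of $k-1$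 to its right cyclically (wrapping to the beginning if needed), then of $k-2$, …, down to $1$; these letters in positional order form a permutation $w^{(1)}$ of $[k]$. Remove them and repeat with the remaining letters to obtain $w^{(2)},\dots$. Then $\operatorname{charge}(w)=\sum_i\operatorname{charge}(w^{(i)})$. *)

theory Defs
  imports Main
begin

definition is_partition :: "nat list \<Rightarrow> bool" where
  "is_partition lam \<longleftrightarrow> sorted_wrt (\<ge>) lam \<and> (\<forall>x\<in>set lam. 0 < x)"

definition first_part :: "nat list \<Rightarrow> nat" where
  "first_part lam = (if lam = [] then 0 else hd lam)"

definition conj_part :: "nat list \<Rightarrow> nat \<Rightarrow> nat" where
  "conj_part lam j = length (filter (\<lambda>x. j \<le> x) lam)"

text \<open>An element M = (B_1,...,B_L) is a list of length L; row r is the set M ! (r-1).\<close>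
definition MLQ :: "nat list \<Rightarrow> nat \<Rightarrow> nat set list set" where
  "MLQ lam n = {M. length M = first_part lam \<and>
      (\<forall>r\<in>{1..first_part lam}. M ! (r - 1) \<subseteq> {1..n} \<and> card (M ! (r - 1)) = conj_part lam r)}"

definition row :: "nat set list \<Rightarrow> nat \<Rightarrow> nat set" where
  "row M r = M ! (r - 1)"

text \<open>Column word: columns 1..n left to right, within a column rows from top (L) to bottom (1).\<close>
definition col_word :: "nat set list \<Rightarrow> nat \<Rightarrow> nat list" where
  "col_word M n = concat (map (\<lambda>j. filter (\<lambda>r. j \<in> row M r) (rev [1..<length M + 1])) [1..<n + 1])"

text \<open>Labels of the balls in a row are stored as a function column \<Rightarrow> label,
  where 0 means "not yet labelled" (genuine labels are \<ge> 1).\<close>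

definition next_free :: "nat set \<Rightarrow> (nat \<Rightarrow> nat) \<Rightarrow> nat \<Rightarrow> nat" where
  "next_free B low j =
     (if \<exists>c\<in>B. j \<le> c \<and> low c = 0
      then (LEAST c. c \<in> B \<and> j \<le> c \<and> low c = 0)
      else (LEAST c. c \<in> B \<and> low c = 0))"

text \<open>Pair the ball of row r in column j (with label up j) to row r-1 (set B);
  state = (labels of row r-1, accumulated maj).\<close>
definition pair_step :: "nat set \<Rightarrow> nat \<Rightarrow> (nat \<Rightarrow> nat) \<Rightarrow> nat \<Rightarrow> (nat \<Rightarrow> nat) \<times> nat \<Rightarrow> (nat \<Rightarrow> nat) \<times> nat" where
  "pair_step B r up j st =
     (let low = fst st; m = snd st; c = next_free B low j; l = up j
      in (low(c := l), m + (if c < j then l + 1 - r else 0)))"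

text \<open>maj_state M d: after processing rows L, L-1, ..., L-d+1, the labels of row L-d
  (0 = unlabelled) and the accumulated maj.\<close>
primrec maj_state :: "nat set list \<Rightarrow> nat \<Rightarrow> (nat \<Rightarrow> nat) \<times> nat" where
  "maj_state M 0 = (\<lambda>_. 0, 0)"
| "maj_state M (Suc d) =
     (let r = length M - d;
          low = fst (maj_state M d);
          m = snd (maj_state M d);
          up = (\<lambda>j. if low j = 0 then r else low j);
          order = sort_key (\<lambda>j. - int (up j)) (sorted_list_of_set (row M r))
      in fold (pair_step (row M (r - 1)) r up) order (\<lambda>_. 0, m))"

text \<open>Rows L, ..., 2 are processed, i.e. L-1 rows. (sort_key is stable, so equal labels
  are taken left to right.)\<close>
definition maj :: "nat set list \<Rightarrow> nat" where
  "maj M = snd (maj_state M (length M - 1))"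

text \<open>Charge of a permutation tau of [m] in one-line notation.\<close>
definition perm_charge :: "nat list \<Rightarrow> nat" where
  "perm_charge tau = (\<Sum>i\<in>{1..<length tau}.
      if (\<exists>a b. a < b \<and> b < length tau \<and> tau ! a = i \<and> tau ! b = Suc i)
      then length tau - i else 0)"

definition cyc_next :: "nat list \<Rightarrow> nat set \<Rightarrow> nat \<Rightarrow> nat \<Rightarrow> nat" where
  "cyc_next w S q i =
     (if \<exists>p\<in>S. q < p \<and> w ! p = i
      then (LEAST p. p \<in> S \<and> q < p \<and> w ! p = i)
      else (LEAST p. p \<in> S \<and> w ! p = i))"

primrec charge_chain :: "nat list \<Rightarrow> nat set \<Rightarrow> nat \<Rightarrow> nat \<Rightarrow> nat" where
  "charge_chain w S k 0 = (LEAST p. p \<in> S \<and> w ! p = k)"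
| "charge_chain w S k (Suc d) = cyc_next w S (charge_chain w S k d) (k - Suc d)"

text \<open>Repeatedly extract charge subwords from the remaining positions S
  (the fuel argument bounds the number of rounds; each round removes \<ge> 1 position).\<close>
primrec charge_aux :: "nat list \<Rightarrow> nat \<Rightarrow> nat set \<Rightarrow> nat" where
  "charge_aux w 0 S = 0"
| "charge_aux w (Suc f) S =
     (if S = {} then 0 else
      (let k = Max ((!) w ` S);
           P = charge_chain w S k ` {..<k};
           tau = map ((!) w) (sorted_list_of_set P)
       in perm_charge tau + charge_aux w f (S - P)))"

definition charge :: "nat list \<Rightarrow> nat" where
  "charge w = charge_aux w (length w) {..<length w}"

end

theory Submission
  imports Defs
begin

definition nfs :: "nat set \<Rightarrow> nat \<Rightarrow> nat" where
  "nfs F j = (if \<exists>c\<in>F. j \<le> c then (LEAST c. c \<in> F \<and> j \<le> c) else (LEAST c. c \<in> F))"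

lemma next_free_nfs: "next_free B low j = nfs {c\<in>B. low c = 0} j"
proof -
  have e1: "(\<lambda>c. c \<in> {c\<in>B. low c = 0} \<and> j \<le> c) = (\<lambda>c. c \<in> B \<and> j \<le> c \<and> low c = 0)" by auto
  have e2: "(\<lambda>c. c \<in> {c\<in>B. low c = 0}) = (\<lambda>c. c \<in> B \<and> low c = 0)" by auto
  have e3: "(\<exists>c\<in>{c\<in>B. low c = 0}. j \<le> c) = (\<exists>c\<in>B. j \<le> c \<and> low c = 0)" by auto
  show ?thesis unfolding next_free_def nfs_def e1 e2 e3 by simp
qed

lemma nfs_in:
  assumes "F \<noteq> {}" shows "nfs F j \<in> F"
proof (cases "\<exists>c\<in>F. j \<le> c")
  case True then show ?thesis unfolding nfs_def by (auto intro: LeastI2_ex)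
next
  case False then show ?thesis using assms unfolding nfs_def by (auto intro: LeastI2_ex)
qed

lemma nfs_prop1:
  assumes "\<exists>c\<in>F. j \<le> c" shows "j \<le> nfs F j \<and> (\<forall>c\<in>F. j \<le> c \<longrightarrow> nfs F j \<le> c)"
  using assms unfolding nfs_def by (auto intro: LeastI2_ex Least_le)

lemma nfs_prop2:
  assumes "\<not>(\<exists>c\<in>F. j \<le> c)" shows "(\<forall>c\<in>F. nfs F j \<le> c)"
  using assms unfolding nfs_def by (auto intro: Least_le)

lemma nfs_eqI:
  assumes "x \<in> F" "(j \<le> x \<and> (\<forall>c\<in>F. j \<le> c \<longrightarrow> x \<le> c)) \<or> ((\<forall>c\<in>F. c < j) \<and> (\<forall>c\<in>F. x \<le> c))"
  shows "nfs F j = x"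
  using assms unfolding nfs_def
  by (auto intro!: Least_equality simp: not_le)

lemma nfs_remove_other:
  assumes "F \<noteq> {}" "y \<in> F" "y \<noteq> nfs F j"
  shows "nfs (F - {y}) j = nfs F j"
proof (rule nfs_eqI)
  show "nfs F j \<in> F - {y}" using assms nfs_in by auto
  show "(j \<le> nfs F j \<and> (\<forall>c\<in>F - {y}. j \<le> c \<longrightarrow> nfs F j \<le> c)) \<or>
    ((\<forall>c\<in>F - {y}. c < j) \<and> (\<forall>c\<in>F - {y}. nfs F j \<le> c))"
  proof (cases "\<exists>c\<in>F. j \<le> c")
    case True then show ?thesis using nfs_prop1[of F j] by auto
  next
    case False then show ?thesis using nfs_prop2[of F j] by (auto simp: not_le)
  qed
qed

lemma nfs_succ_aux:
  assumes "F - {nfs F j} \<noteq> {}"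
  defines "x \<equiv> nfs F j"
  defines "s \<equiv> nfs (F - {x}) (Suc x)"
  shows "nfs (F - {x}) j = s \<and> (s < j \<longleftrightarrow> (x < j \<or> s < x)) \<and> \<not> (x < j \<and> s < x)"
proof -
  have F: "F \<noteq> {}" using assms by auto
  have xF: "x \<in> F" using nfs_in[OF F] x_def by auto
  have sF: "s \<in> F - {x}" unfolding s_def x_def using nfs_in[OF assms(1)] by auto
  have p1: "\<exists>c\<in>F - {x}. Suc x \<le> c \<Longrightarrow> Suc x \<le> s \<and> (\<forall>c\<in>F - {x}. Suc x \<le> c \<longrightarrow> s \<le> c)"
    unfolding s_def by (rule nfs_prop1)
  have p2: "\<not>(\<exists>c\<in>F - {x}. Suc x \<le> c) \<Longrightarrow> (\<forall>c\<in>F - {x}. s \<le> c)"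
    unfolding s_def by (rule nfs_prop2)
  have q1: "\<exists>c\<in>F. j \<le> c \<Longrightarrow> j \<le> x \<and> (\<forall>c\<in>F. j \<le> c \<longrightarrow> x \<le> c)"
    unfolding x_def by (rule nfs_prop1)
  have q2: "\<not>(\<exists>c\<in>F. j \<le> c) \<Longrightarrow> (\<forall>c\<in>F. x \<le> c)"
    unfolding x_def by (rule nfs_prop2)
  have ne: "\<And>c. c \<in> F - {x} \<Longrightarrow> c \<noteq> x" by blast
  show ?thesis
  proof (cases "\<exists>c\<in>F. j \<le> c")
    case True
    note q = q1[OF True]
    show ?thesis
    proof (cases "\<exists>c\<in>F - {x}. Suc x \<le> c")
      case True
      note p = p1[OF True]
      have a: "j \<le> s" using p q by linarith
      have b: "\<forall>c\<in>F - {x}. j \<le> c \<longrightarrow> s \<le> c"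
      proof (intro ballI impI)
        fix c assume c: "c \<in> F - {x}" "j \<le> c"
        then have "x \<le> c" using q by blast
        moreover have "c \<noteq> x" using c by blast
        ultimately have "Suc x \<le> c" by linarith
        then show "s \<le> c" using p c by blast
      qed
      have "nfs (F - {x}) j = s" using nfs_eqI[OF sF] a b by blast
      moreover have "\<not> s < j" "\<not> x < j" "\<not> s < x" using a q p by linarith+
      ultimately show ?thesis by blast
    next
      case False
      note p = p2[OF False]
      have lt: "\<forall>c\<in>F - {x}. c < x"
      proof
        fix c assume c: "c \<in> F - {x}"
        then have "\<not> Suc x \<le> c" using False by blast
        moreover have "c \<noteq> x" using c by blast
        ultimately show "c < x" by linarith
      qed
      have lt2: "\<forall>c\<in>F - {x}. c < j"
      proof
        fix c assume c: "c \<in> F - {x}"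
        show "c < j"
        proof (rule ccontr)
          assume "\<not> c < j"
          then have "x \<le> c" using q c by auto
          moreover have "c < x" using lt c by blast
          ultimately show False by linarith
        qed
      qed
      have "nfs (F - {x}) j = s" using nfs_eqI[OF sF] p lt2 by blast
      moreover have "s < x" using lt sF by blast
      moreover have "s < j" using lt2 sF by blast
      moreover have "\<not> x < j" using q by linarith
      ultimately show ?thesis by blast
    qed
  next
    case False
    note q = q2[OF False]
    have lt2: "\<forall>c\<in>F. c < j" using False by (auto simp: not_le)
    have ex: "\<exists>c\<in>F - {x}. Suc x \<le> c"
    proof -
      have "s \<in> F" "s \<noteq> x" using sF by auto
      then have "Suc x \<le> s" using q by (metis le_neq_implies_less Suc_leI)
      then show ?thesis using sF by blast
    qed
    note p = p1[OF ex]
    have b: "\<forall>c\<in>F - {x}. s \<le> c"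
    proof
      fix c assume c: "c \<in> F - {x}"
      then have "Suc x \<le> c" using q by (metis DiffE insertI1 le_neq_implies_less Suc_leI)
      then show "s \<le> c" using p c by blast
    qed
    have "nfs (F - {x}) j = s" using nfs_eqI[OF sF] lt2 b by blast
    moreover have "s < j" "x < j" "\<not> s < x" using lt2 sF xF p by auto
    ultimately show ?thesis by blast
  qed
qed


lemma card_ge_ne: "Suc n \<le> card A \<Longrightarrow> A \<noteq> {}"
  by auto

lemma free_upd: "l \<noteq> 0 \<Longrightarrow> {c\<in>B. (low(x := l)) c = 0} = {c\<in>B. low c = 0} - {x}"
  by auto

lemma pair_step_eq:
  "pair_step B r up j st = ((fst st)(nfs {c\<in>B. fst st c = 0} j := up j),
     snd st + (if nfs {c\<in>B. fst st c = 0} j < j then up j + 1 - r else 0))"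
  unfolding pair_step_def Let_def next_free_nfs by simp

lemma step_comm:
  assumes fin: "finite B" and card: "2 \<le> card {c\<in>B. fst st c = 0}"
    and u: "up j1 = up j2" "up j1 \<noteq> 0"
  shows "pair_step B r up j2 (pair_step B r up j1 st) = pair_step B r up j1 (pair_step B r up j2 st)"
proof -
  obtain low m where st: "st = (low, m)" by (cases st)
  define F where "F = {c\<in>B. low c = 0}"
  define l where "l = up j1"
  have l2: "up j2 = l" using u l_def by simp
  have l0: "l \<noteq> 0" using u l_def by simp
  have finF: "finite F" using fin F_def by simp
  have cF: "2 \<le> card F" using card st F_def by simp
  have Fne: "F \<noteq> {}" using cF by auto
  define x1 where "x1 = nfs F j1"
  define x2 where "x2 = nfs F j2"
  have x1F: "x1 \<in> F" using nfs_in[OF Fne] x1_def by simp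
  have x2F: "x2 \<in> F" using nfs_in[OF Fne] x2_def by simp
  have "card (F - {x1}) = card F - 1" using x1F finF by simp
  then have ne1: "F - {x1} \<noteq> {}" using cF card_ge_ne[of 0 "F - {x1}"] by simp
  have "card (F - {x2}) = card F - 1" using x2F finF by simp
  then have ne2: "F - {x2} \<noteq> {}" using cF card_ge_ne[of 0 "F - {x2}"] by simp
  have fr1: "{c\<in>B. (low(x1 := l)) c = 0} = F - {x1}" unfolding F_def by (rule free_upd[OF l0])
  have fr2: "{c\<in>B. (low(x2 := l)) c = 0} = F - {x2}" unfolding F_def by (rule free_upd[OF l0])
  show ?thesis
  proof (cases "x1 = x2")
    case False
    have a: "nfs (F - {x1}) j2 = x2"
      using nfs_remove_other[OF Fne x1F, of j2] False x2_def by simp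
    have b: "nfs (F - {x2}) j1 = x1"
      using nfs_remove_other[OF Fne x2F, of j1] False x1_def by simp
    show ?thesis
      unfolding pair_step_eq st fst_conv snd_conv F_def[symmetric] x1_def[symmetric] x2_def[symmetric]
        l_def[symmetric] l2 fr1 fr2 a b
      using False by (auto simp: fun_eq_iff)
  next
    case True
    define s where "s = nfs (F - {x1}) (Suc x1)"
    have A1: "nfs (F - {x1}) j1 = s \<and> (s < j1 \<longleftrightarrow> (x1 < j1 \<or> s < x1)) \<and> \<not> (x1 < j1 \<and> s < x1)"
      using nfs_succ_aux[of F j1] ne1 x1_def s_def by simp
    have A2: "nfs (F - {x1}) j2 = s \<and> (s < j2 \<longleftrightarrow> (x1 < j2 \<or> s < x1)) \<and> \<not> (x1 < j2 \<and> s < x1)"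
      using nfs_succ_aux[of F j2] ne1 True x2_def s_def by simp
    have x2e: "x2 = x1" using True by simp
    show ?thesis
      unfolding pair_step_eq st fst_conv snd_conv F_def[symmetric] x1_def[symmetric] x2_def[symmetric]
        l_def[symmetric] l2 fr1 fr2 x2e
      using A1 A2 by (cases "s < x1") auto
  qed
qed


lemma card_free_step:
  assumes "finite B" "{c\<in>B. fst st c = 0} \<noteq> {}" "up j \<noteq> 0"
  shows "card {c\<in>B. fst (pair_step B r up j st) c = 0} = card {c\<in>B. fst st c = 0} - 1"
proof -
  have "{c\<in>B. fst (pair_step B r up j st) c = 0} = {c\<in>B. fst st c = 0} - {nfs {c\<in>B. fst st c = 0} j}"
    unfolding pair_step_eq fst_conv by (rule free_upd[OF assms(3)])
  moreover have "nfs {c\<in>B. fst st c = 0} j \<in> {c\<in>B. fst st c = 0}" using nfs_in[OF assms(2)] by blast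
  ultimately show ?thesis using assms(1) by simp
qed

lemma fold_move:
  assumes "finite B" "\<forall>y\<in>set ys. up y = up x" "up x \<noteq> 0"
    "length (ys @ x # zs) \<le> card {c\<in>B. fst st c = 0}"
  shows "fold (pair_step B r up) (ys @ x # zs) st = fold (pair_step B r up) (x # ys @ zs) st"
  using assms(2,4)
proof (induction ys arbitrary: st)
  case Nil
  then show ?case by simp
next
  case (Cons y ys)
  have ne: "{c\<in>B. fst st c = 0} \<noteq> {}" using Cons.prems(2) card_ge_ne[of _ "{c\<in>B. fst st c = 0}"] by simp
  have uy: "up y = up x" using Cons.prems(1) by simp
  have c1: "card {c\<in>B. fst (pair_step B r up y st) c = 0} = card {c\<in>B. fst st c = 0} - 1"
    using card_free_step[OF assms(1) ne] uy assms(3) by simp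
  have IH: "fold (pair_step B r up) (ys @ x # zs) (pair_step B r up y st) =
      fold (pair_step B r up) (x # ys @ zs) (pair_step B r up y st)"
    using Cons.IH[of "pair_step B r up y st"] Cons.prems c1 by simp
  have cm: "pair_step B r up x (pair_step B r up y st) = pair_step B r up y (pair_step B r up x st)"
  proof (rule step_comm[OF assms(1)])
    show "2 \<le> card {c\<in>B. fst st c = 0}" using Cons.prems(2) by simp
    show "up y = up x" by (rule uy)
    show "up y \<noteq> 0" using uy assms(3) by simp
  qed
  show ?case using IH cm by simp
qed

lemma fold_bound:
  assumes "\<forall>j. fst st j \<le> k" "\<forall>j\<in>set xs. up j \<le> k"
  shows "\<forall>j. fst (fold (pair_step B r up) xs st) j \<le> k"
  using assms
proof (induction xs arbitrary: st)
  case Nil then show ?case by simp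
next
  case (Cons a xs)
  have "\<forall>j. fst (pair_step B r up a st) j \<le> k" using Cons.prems unfolding pair_step_eq by simp
  then show ?case using Cons by simp
qed

lemma fold_rel:
  assumes fin: "finite B" and c0: "fst st c0 \<noteq> 0"
    and st': "fst st' = (fst st)(c0 := 0)"
    and u: "\<forall>j\<in>set xs. up' j = up j \<and> up j \<noteq> 0"
    and len: "length xs \<le> card {c\<in>B. fst st c = 0}"
  shows "fst (fold (pair_step (B - {c0}) r up') xs st') = (fst (fold (pair_step B r up) xs st))(c0 := 0)
    \<and> fst (fold (pair_step B r up) xs st) c0 = fst st c0
    \<and> snd (fold (pair_step B r up) xs st) + snd st' = snd (fold (pair_step (B - {c0}) r up') xs st') + snd st"
  using c0 st' u len
proof (induction xs arbitrary: st st')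
  case Nil then show ?case by simp
next
  case (Cons a xs)
  define F where "F = {c\<in>B. fst st c = 0}"
  have Fe: "{c\<in>B - {c0}. fst st' c = 0} = F" using Cons.prems(1,2) F_def by auto
  have ne: "F \<noteq> {}"
  proof
    assume "F = {}" then have "card F = 0" by simp
    with Cons.prems(4) F_def show False by simp
  qed
  define x where "x = nfs F a"
  have xF: "x \<in> F" using nfs_in[OF ne] x_def by simp
  have xc0: "x \<noteq> c0" using xF F_def Cons.prems(1) by auto
  have ua: "up' a = up a" "up a \<noteq> 0" using Cons.prems(3) by auto
  have s1: "pair_step B r up a st = ((fst st)(x := up a), snd st + (if x < a then up a + 1 - r else 0))"
    unfolding pair_step_eq F_def[symmetric] x_def[symmetric] by simp
  have s2: "pair_step (B - {c0}) r up' a st' = ((fst st')(x := up a), snd st' + (if x < a then up a + 1 - r else 0))"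
    unfolding pair_step_eq Fe x_def[symmetric] ua(1) by simp
  have cfree: "card {c\<in>B. fst (pair_step B r up a st) c = 0} = card F - 1"
    using card_free_step[OF fin, of st] ne ua(2) F_def by simp
  have P1: "fst (pair_step B r up a st) c0 \<noteq> 0" using s1 xc0 Cons.prems(1) by simp
  have P2: "fst (pair_step (B - {c0}) r up' a st') = (fst (pair_step B r up a st))(c0 := 0)"
    unfolding s1 s2 fst_conv Cons.prems(2) using xc0 by (auto simp: fun_eq_iff)
  note IH = Cons.IH[OF P1 P2]
  have pre: "\<forall>j\<in>set xs. up' j = up j \<and> up j \<noteq> 0"
    "length xs \<le> card {c\<in>B. fst (pair_step B r up a st) c = 0}"
    using Cons.prems(3,4) cfree F_def by auto
  note IH' = IH[OF pre]
  show ?case using IH' s1 s2 xc0 by simp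
qed


lemma filter_notin: "x \<notin> set xs \<Longrightarrow> filter (\<lambda>y. y \<noteq> x) xs = xs"
  by (induction xs) auto

lemma remove1_distinct_filter: "distinct xs \<Longrightarrow> remove1 x xs = filter (\<lambda>y. y \<noteq> x) xs"
  by (induction xs) (auto simp: filter_notin)

lemma insort_key_cong: "(\<forall>y\<in>set (x # xs). f y = g y) \<Longrightarrow> insort_key f x xs = insort_key g x xs"
  by (induction xs) auto

lemma sort_key_cong: "(\<forall>y\<in>set xs. f y = g y) \<Longrightarrow> sort_key f xs = sort_key g xs"
proof (induction xs)
  case Nil then show ?case by simp
next
  case (Cons a xs)
  then have "sort_key f xs = sort_key g xs" by simp
  moreover have "insort_key f a (sort_key g xs) = insort_key g a (sort_key g xs)"
    using Cons.prems by (intro insort_key_cong) simp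
  ultimately show ?case by simp
qed

lemma row_step:
  fixes r m m' k :: nat
  assumes finA: "finite A" and finB: "finite B" and cA: "c \<in> A" and cardAB: "card A \<le> card B"
    and upc: "up c = k" and upk: "\<forall>j. up j \<le> k" and up0: "\<forall>j\<in>A. up j \<noteq> 0"
    and upe: "\<forall>j. j \<noteq> c \<longrightarrow> up' j = up j"
  defines "c' \<equiv> nfs B c"
  defines "res \<equiv> fold (pair_step B r up) (sort_key (\<lambda>j. - int (up j)) (sorted_list_of_set A)) (\<lambda>_. 0, m)"
  defines "res' \<equiv> fold (pair_step (B - {c'}) r up') (sort_key (\<lambda>j. - int (up' j)) (sorted_list_of_set (A - {c}))) (\<lambda>_. 0, m')"
  shows "fst res' = (fst res)(c' := 0) \<and> fst res c' = k \<and> (\<forall>j. fst res j \<le> k)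
    \<and> snd res + m' = snd res' + m + (if c' < c then k + 1 - r else 0)"
proof -
  define f where "f = (\<lambda>j. - int (up j))"
  define f' where "f' = (\<lambda>j. - int (up' j))"
  define order where "order = sort_key f (sorted_list_of_set A)"
  have dord: "distinct order" using finA order_def by simp
  have sord: "set order = A" using finA order_def by simp
  have lord: "length order = card A" using finA order_def by simp
  obtain ys zs where split: "order = ys @ c # zs" using split_list[of c order] sord cA by auto
  have cys: "c \<notin> set ys" "c \<notin> set zs" using dord split by auto
  have sorted: "sorted (map f order)" unfolding order_def by simp
  have ysk: "\<forall>y\<in>set ys. up y = up c"
  proof
    fix y assume y: "y \<in> set ys"
    have "sorted (map f ys @ f c # map f zs)" using sorted split by simp
    then have "f y \<le> f c" using y unfolding sorted_append by auto
    then have "up c \<le> up y" unfolding f_def by simp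
    then show "up y = up c" using upk upc by (metis le_antisym)
  qed
  have k0: "k \<noteq> 0" using up0 cA upc by auto
  have cardk: "1 \<le> card A" using cA finA by (metis One_nat_def Suc_leI card_gt_0_iff empty_iff)
  have Bne: "B \<noteq> {}" using cardk cardAB by auto
  have c'B: "c' \<in> B" using nfs_in[OF Bne] c'_def by simp
  have free0: "{x\<in>B. (\<lambda>_. 0::nat) x = 0} = B" by simp
  have mv: "res = fold (pair_step B r up) (c # ys @ zs) (\<lambda>_. 0, m)"
    unfolding res_def f_def[symmetric] order_def[symmetric] split
  proof (rule fold_move[OF finB])
    show "\<forall>y\<in>set ys. up y = up c" by (rule ysk)
    show "up c \<noteq> 0" using k0 upc by simp
    show "length (ys @ c # zs) \<le> card {ca \<in> B. fst (\<lambda>_. 0::nat, m) ca = 0}"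
      using lord split cardAB by simp
  qed
  define w where "w = (if c' < c then k + 1 - r else 0)"
  define st where "st = ((\<lambda>_. 0::nat)(c' := k), m + w)"
  have st1: "pair_step B r up c (\<lambda>_. 0, m) = st"
    unfolding pair_step_eq st_def w_def c'_def fst_conv snd_conv free0 upc by simp
  have res2: "res = fold (pair_step B r up) (ys @ zs) st" using mv st1 by simp
  have ord': "sort_key f' (sorted_list_of_set (A - {c})) = ys @ zs"
  proof -
    have "sorted_list_of_set (A - {c}) = filter (\<lambda>y. y \<noteq> c) (sorted_list_of_set A)"
      using sorted_list_of_set_remove[OF finA, of c] remove1_distinct_filter[of "sorted_list_of_set A" c] finA by simp
    then have "sort_key f' (sorted_list_of_set (A - {c})) = sort_key f' (filter (\<lambda>y. y \<noteq> c) (sorted_list_of_set A))"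
      by simp
    also have "\<dots> = sort_key f (filter (\<lambda>y. y \<noteq> c) (sorted_list_of_set A))"
      by (rule sort_key_cong) (use upe in \<open>auto simp: f_def f'_def\<close>)
    also have "\<dots> = filter (\<lambda>y. y \<noteq> c) order" unfolding order_def by (simp add: filter_sort)
    also have "\<dots> = ys @ zs" using split cys by (simp add: filter_notin)
    finally show ?thesis .
  qed
  have res'2: "res' = fold (pair_step (B - {c'}) r up') (ys @ zs) (\<lambda>_. 0, m')"
    unfolding res'_def f'_def[symmetric] ord' by simp
  have P1: "fst st c' \<noteq> 0" using k0 st_def by simp
  have P2: "fst (\<lambda>_. 0::nat, m') = (fst st)(c' := 0)" unfolding st_def by auto
  have P3: "\<forall>j\<in>set (ys @ zs). up' j = up j \<and> up j \<noteq> 0"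
    using upe cys up0 sord split by auto
  have "{ca \<in> B. fst st ca = 0} = B - {c'}" unfolding st_def using k0 by auto
  then have P4: "length (ys @ zs) \<le> card {ca \<in> B. fst st ca = 0}"
    using lord split cardAB c'B finB by simp
  note R = fold_rel[OF finB P1 P2 P3 P4, where r=r]
  have bd: "\<forall>j. fst res j \<le> k" unfolding res2
    by (rule fold_bound) (use upk in \<open>auto simp: st_def\<close>)
  show ?thesis using R bd unfolding res2 res'2 st_def w_def by simp
qed

definition valid :: "nat set list \<Rightarrow> bool" where
  "valid R \<longleftrightarrow> (\<forall>r\<in>{1..length R}. finite (row R r)) \<and>
     (\<forall>r. 1 \<le> r \<longrightarrow> r < length R \<longrightarrow> card (row R (Suc r)) \<le> card (row R r))"

definition toprow :: "nat set list \<Rightarrow> nat" where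
  "toprow R = Max {r\<in>{1..length R}. row R r \<noteq> {}}"

primrec chn :: "nat set list \<Rightarrow> nat \<Rightarrow> nat \<Rightarrow> nat" where
  "chn R k 0 = Min (row R k)"
| "chn R k (Suc d) = nfs (row R (k - Suc d)) (chn R k d)"

definition col :: "nat set list \<Rightarrow> nat \<Rightarrow> nat \<Rightarrow> nat" where
  "col R k r = chn R k (k - r)"

definition rem :: "nat set list \<Rightarrow> nat \<Rightarrow> nat set list" where
  "rem R k = map (\<lambda>i. if Suc i \<le> k then R ! i - {col R k (Suc i)} else R ! i) [0..<length R]"

definition wterm :: "nat set list \<Rightarrow> nat \<Rightarrow> nat \<Rightarrow> nat" where
  "wterm R k r = (if col R k (r - 1) < col R k r then k + 1 - r else 0)"

definition wsum :: "nat set list \<Rightarrow> nat \<Rightarrow> nat" where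
  "wsum R k = (\<Sum>r\<in>{2..k}. wterm R k r)"

definition nonempty :: "nat set list \<Rightarrow> bool" where
  "nonempty R \<longleftrightarrow> (\<exists>r\<in>{1..length R}. row R r \<noteq> {})"

definition cnt :: "nat set list \<Rightarrow> nat" where
  "cnt R = (\<Sum>r\<in>{1..length R}. card (row R r))"

lemma length_rem[simp]: "length (rem R k) = length R"
  by (simp add: rem_def)

lemma row_rem: "1 \<le> r \<Longrightarrow> r \<le> length R \<Longrightarrow>
  row (rem R k) r = (if r \<le> k then row R r - {col R k r} else row R r)"
  by (simp add: rem_def row_def)

lemma card_mono_rows:
  assumes "valid R" "1 \<le> r" "r \<le> s" "s \<le> length R"
  shows "card (row R s) \<le> card (row R r)"
  using assms(3,4)
proof (induction s rule: dec_induct)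
  case base then show ?case by simp
next
  case (step s)
  then have "card (row R (Suc s)) \<le> card (row R s)" using assms(1,2) unfolding valid_def by auto
  then show ?case using step by simp
qed

context
  fixes R :: "nat set list" and k :: nat
  assumes V: "valid R" and NE: "nonempty R" and K: "k = toprow R"
begin

lemma top_props: "1 \<le> k" "k \<le> length R" "row R k \<noteq> {}"
proof -
  have fin: "finite {r\<in>{1..length R}. row R r \<noteq> {}}" by simp
  have ne: "{r\<in>{1..length R}. row R r \<noteq> {}} \<noteq> {}" using NE unfolding nonempty_def by auto
  have "k \<in> {r\<in>{1..length R}. row R r \<noteq> {}}" unfolding K toprow_def using Max_in[OF fin ne] .
  then show "1 \<le> k" "k \<le> length R" "row R k \<noteq> {}" by auto
qed

lemma above_top: "k < r \<Longrightarrow> r \<le> length R \<Longrightarrow> row R r = {}"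
proof (rule ccontr)
  assume a: "k < r" "r \<le> length R" "row R r \<noteq> {}"
  have fin: "finite {r\<in>{1..length R}. row R r \<noteq> {}}" by simp
  have "r \<le> k" unfolding K toprow_def using Max_ge[OF fin] a by auto
  then show False using a by simp
qed

lemma fin_row: "1 \<le> r \<Longrightarrow> r \<le> length R \<Longrightarrow> finite (row R r)"
  using V unfolding valid_def by auto

lemma row_ne: "1 \<le> r \<Longrightarrow> r \<le> k \<Longrightarrow> row R r \<noteq> {}"
proof -
  assume r: "1 \<le> r" "r \<le> k"
  have "card (row R k) \<le> card (row R r)" using card_mono_rows[OF V r] top_props by simp
  moreover have "card (row R k) > 0" using top_props fin_row by auto
  ultimately show "row R r \<noteq> {}" by auto
qed

lemma col_in: "1 \<le> r \<Longrightarrow> r \<le> k \<Longrightarrow> col R k r \<in> row R r"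
proof -
  have "\<forall>r. 1 \<le> r \<longrightarrow> r \<le> k \<longrightarrow> k - r = d \<longrightarrow> chn R k d \<in> row R r" for d
  proof (induction d)
    case 0
    show ?case
    proof (intro allI impI)
      fix r assume r: "1 \<le> r" "r \<le> k" "k - r = 0"
      then have "r = k" by simp
      then show "chn R k 0 \<in> row R r"
        using Min_in[OF fin_row row_ne] top_props by simp
    qed
  next
    case (Suc d)
    show ?case
    proof (intro allI impI)
      fix r assume r: "1 \<le> r" "r \<le> k" "k - r = Suc d"
      then have "k - Suc d = r" by simp
      then show "chn R k (Suc d) \<in> row R r" using nfs_in[OF row_ne[OF r(1,2)]] by simp
    qed
  qed
  then show "1 \<le> r \<Longrightarrow> r \<le> k \<Longrightarrow> col R k r \<in> row R r" unfolding col_def by blast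
qed

lemma col_step: "2 \<le> r \<Longrightarrow> r \<le> k \<Longrightarrow> col R k (r - 1) = nfs (row R (r - 1)) (col R k r)"
proof -
  assume r: "2 \<le> r" "r \<le> k"
  then have "k - (r - 1) = Suc (k - r)" by simp
  moreover have "k - Suc (k - r) = r - 1" using r by simp
  ultimately show ?thesis unfolding col_def by simp
qed

lemma valid_rem: "valid (rem R k)"
  unfolding valid_def
proof (intro conjI allI impI ballI)
  fix r assume "r \<in> {1..length (rem R k)}"
  then show "finite (row (rem R k) r)" using row_rem fin_row by auto
next
  fix r assume r: "1 \<le> r" "r < length (rem R k)"
  have L: "r < length R" using r by simp
  have c1: "card (row R (Suc r)) \<le> card (row R r)" using V r unfolding valid_def by auto
  show "card (row (rem R k) (Suc r)) \<le> card (row (rem R k) r)"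
  proof (cases "Suc r \<le> k")
    case True
    then show ?thesis using row_rem[of "Suc r" R k] row_rem[of r R k] L r c1
      col_in[of r] col_in[of "Suc r"] fin_row[of r] fin_row[of "Suc r"] by simp
  next
    case False
    show ?thesis
    proof (cases "r = k")
      case True
      then have "row R (Suc r) = {}" using above_top L by simp
      then show ?thesis using row_rem[of "Suc r" R k] L True by simp
    next
      case False
      then show ?thesis using row_rem[of "Suc r" R k] row_rem[of r R k] L r c1 \<open>\<not> Suc r \<le> k\<close> by simp
    qed
  qed
qed

lemma cnt_rem: "cnt (rem R k) < cnt R"
  unfolding cnt_def length_rem
proof (rule sum_strict_mono_ex1)
  show "finite {1..length R}" by simp
  show "\<forall>x\<in>{1..length R}. card (row (rem R k) x) \<le> card (row R x)"
    using row_rem fin_row by (auto intro: card_mono)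
  have "card (row (rem R k) k) < card (row R k)"
    using row_rem[of k R k] top_props col_in[of k] fin_row[of k]
    by (simp add: card_gt_0_iff)
  then show "\<exists>a\<in>{1..length R}. card (row (rem R k) a) < card (row R a)" using top_props by auto
qed

lemma step_gen:
  fixes up up' :: "nat \<Rightarrow> nat" and m m' r :: nat
  assumes r: "2 \<le> r" "r \<le> k" and upc: "up (col R k r) = k" and upk: "\<forall>j. up j \<le> k"
    and up0: "\<forall>j. up j \<noteq> 0" and upe: "\<forall>j. j \<noteq> col R k r \<longrightarrow> up' j = up j"
  defines "res \<equiv> fold (pair_step (row R (r - 1)) r up) (sort_key (\<lambda>j. - int (up j)) (sorted_list_of_set (row R r))) (\<lambda>_. 0, m)"
  defines "res' \<equiv> fold (pair_step (row (rem R k) (r - 1)) r up') (sort_key (\<lambda>j. - int (up' j)) (sorted_list_of_set (row (rem R k) r))) (\<lambda>_. 0, m')"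
  shows "fst res' = (fst res)(col R k (r - 1) := 0) \<and> fst res (col R k (r - 1)) = k \<and> (\<forall>j. fst res j \<le> k)
    \<and> snd res + m' = snd res' + m + wterm R k r"
proof -
  have rL: "r \<le> length R" using r top_props by simp
  have e1: "row (rem R k) r = row R r - {col R k r}" using row_rem[of r R k] r rL by simp
  have e2: "row (rem R k) (r - 1) = row R (r - 1) - {col R k (r - 1)}" using row_rem[of "r - 1" R k] r rL by simp
  have cs: "col R k (r - 1) = nfs (row R (r - 1)) (col R k r)" using col_step r by simp
  have cardAB: "card (row R r) \<le> card (row R (r - 1))" using card_mono_rows[OF V, of "r - 1" r] r rL by simp
  have wt: "wterm R k r = (if col R k (r - 1) < col R k r then k + 1 - r else 0)" unfolding wterm_def by simp
  show ?thesis
    unfolding res_def res'_def e1 e2 wt cs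
    by (rule row_step[OF fin_row[of r] fin_row[of "r - 1"] col_in[of r] cardAB upc upk _ upe])
       (use r rL up0 in auto)
qed

lemma ms_suc: "maj_state M (Suc d) = fold (pair_step (row M (length M - d - 1)) (length M - d)
   (\<lambda>j. if fst (maj_state M d) j = 0 then length M - d else fst (maj_state M d) j))
   (sort_key (\<lambda>j. - int (if fst (maj_state M d) j = 0 then length M - d else fst (maj_state M d) j))
     (sorted_list_of_set (row M (length M - d)))) (\<lambda>_. 0, snd (maj_state M d))"
  by (simp add: Let_def)

lemma inv:
  "d \<le> length R - 1 \<Longrightarrow>
   (d \<le> length R - k \<longrightarrow> maj_state R d = maj_state (rem R k) d \<and> fst (maj_state R d) = (\<lambda>_. 0)) \<and>
   (length R - k < d \<longrightarrow>
      fst (maj_state (rem R k) d) = (fst (maj_state R d))(col R k (length R - d) := 0) \<and>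
      fst (maj_state R d) (col R k (length R - d)) = k \<and> (\<forall>j. fst (maj_state R d) j \<le> k) \<and>
      snd (maj_state R d) = snd (maj_state (rem R k) d) + (\<Sum>r\<in>{length R - d + 1..k}. wterm R k r))"
proof (induction d)
  case 0
  then show ?case using top_props by simp
next
  case (Suc d)
  define L where "L = length R"
  define r where "r = L - d"
  have r2: "2 \<le> r" using Suc.prems r_def L_def by simp
  have rL: "r \<le> L" using r_def by simp
  note IH = Suc.IH[OF _]
  have IHd: "d \<le> length R - 1" using Suc.prems by simp
  note I = Suc.IH[OF IHd]
  have lenR': "length (rem R k) = L" using L_def by simp
  show ?case
  proof (cases "Suc d \<le> L - k")
    case True
    have rk: "k < r" using True r_def L_def top_props by simp
    have e: "row R r = {}" using above_top rk rL L_def by simp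
    have e': "row (rem R k) r = {}" using row_rem[of r R k] e rk rL r2 L_def by simp
    have d1: "d \<le> L - k" using True by simp
    have A: "maj_state R (Suc d) = (\<lambda>_. 0, snd (maj_state R d))"
      using ms_suc[of R d] e r_def L_def by simp
    have B: "maj_state (rem R k) (Suc d) = (\<lambda>_. 0, snd (maj_state (rem R k) d))"
      using ms_suc[of "rem R k" d] e' r_def lenR' by simp
    show ?thesis using A B I d1 True L_def by simp
  next
    case False
    have rk: "r \<le> k" using False r_def L_def top_props by simp
    have rr: "length R - Suc d = r - 1" using r_def L_def by simp
    define low where "low = fst (maj_state R d)"
    define low' where "low' = fst (maj_state (rem R k) d)"
    define up where "up = (\<lambda>j. if low j = 0 then r else low j)"
    define up' where "up' = (\<lambda>j. if low' j = 0 then r else low' j)"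
    have msR: "maj_state R (Suc d) = fold (pair_step (row R (r - 1)) r up)
       (sort_key (\<lambda>j. - int (up j)) (sorted_list_of_set (row R r))) (\<lambda>_. 0, snd (maj_state R d))"
      using ms_suc[of R d] unfolding up_def low_def r_def L_def by (simp add: diff_diff_add)
    have msR': "maj_state (rem R k) (Suc d) = fold (pair_step (row (rem R k) (r - 1)) r up')
       (sort_key (\<lambda>j. - int (up' j)) (sorted_list_of_set (row (rem R k) r))) (\<lambda>_. 0, snd (maj_state (rem R k) d))"
      using ms_suc[of "rem R k" d, unfolded length_rem] unfolding up'_def low'_def r_def L_def by (simp add: diff_diff_add)
    have up0: "\<forall>j. up j \<noteq> 0" unfolding up_def using r2 by auto
    show ?thesis
    proof (cases "d = L - k")
      case True
      have eq: "maj_state R d = maj_state (rem R k) d" "low = (\<lambda>_. 0)"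
        using I True L_def low_def by auto
      have rk': "r = k" using True r_def L_def top_props by simp
      have upk: "up = (\<lambda>_. k)" unfolding up_def eq rk' by simp
      have upk': "up' = (\<lambda>_. k)" unfolding up'_def low'_def eq(1)[symmetric] low_def[symmetric] eq(2) rk' by simp
      note S = step_gen[OF r2 rk, of up up']
      have G: "fst (maj_state (rem R k) (Suc d)) = (fst (maj_state R (Suc d)))(col R k (r - 1) := 0) \<and>
        fst (maj_state R (Suc d)) (col R k (r - 1)) = k \<and> (\<forall>j. fst (maj_state R (Suc d)) j \<le> k) \<and>
        snd (maj_state R (Suc d)) + snd (maj_state (rem R k) d) = snd (maj_state (rem R k) (Suc d)) + snd (maj_state R d) + wterm R k r"
        unfolding msR msR' by (rule S) (use upk upk' top_props in auto)
      have sum: "(\<Sum>r\<in>{length R - Suc d + 1..k}. wterm R k r) = wterm R k r"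
        using rr rk' r2 by simp
      show ?thesis using G eq rr sum True L_def by simp
    next
      case False
      have dgt: "L - k < d" using False \<open>\<not> Suc d \<le> L - k\<close> by simp
      note J = I[THEN conjunct2, rule_format, OF dgt[unfolded L_def]]
      have Ld: "length R - d = r" using r_def L_def by simp
      have upc: "up (col R k r) = k" using J Ld unfolding up_def low_def using top_props by simp
      have upk: "\<forall>j. up j \<le> k" using J rk unfolding up_def low_def by simp
      have upe: "\<forall>j. j \<noteq> col R k r \<longrightarrow> up' j = up j" using J Ld unfolding up_def up'_def low_def low'_def by simp
      note S = step_gen[OF r2 rk upc upk up0 upe]
      have G: "fst (maj_state (rem R k) (Suc d)) = (fst (maj_state R (Suc d)))(col R k (r - 1) := 0) \<and>
        fst (maj_state R (Suc d)) (col R k (r - 1)) = k \<and> (\<forall>j. fst (maj_state R (Suc d)) j \<le> k) \<and>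
        snd (maj_state R (Suc d)) + snd (maj_state (rem R k) d) = snd (maj_state (rem R k) (Suc d)) + snd (maj_state R d) + wterm R k r"
        unfolding msR msR' by (rule S)
      have sum: "(\<Sum>r\<in>{length R - Suc d + 1..k}. wterm R k r) = wterm R k r + (\<Sum>r\<in>{length R - d + 1..k}. wterm R k r)"
      proof -
        have "{length R - Suc d + 1..k} = insert r {length R - d + 1..k}" using rr Ld rk r2 by auto
        then show ?thesis using Ld by simp
      qed
      show ?thesis using G J rr sum dgt L_def by simp
    qed
  qed
qed

lemma maj_chain: "maj R = wsum R k + maj (rem R k)"
proof -
  define L where "L = length R"
  have kL: "1 \<le> k" "k \<le> L" using top_props L_def by auto
  note I = inv[of "L - 1", unfolded L_def[symmetric]]
  show ?thesis
  proof (cases "k = 1")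
    case True
    then have "maj_state R (L - 1) = maj_state (rem R k) (L - 1)" using I L_def by simp
    moreover have "wsum R k = 0" unfolding wsum_def using True by simp
    ultimately show ?thesis unfolding maj_def using L_def by simp
  next
    case False
    then have "L - k < L - 1" using kL by simp
    then have "snd (maj_state R (L - 1)) = snd (maj_state (rem R k) (L - 1)) + (\<Sum>r\<in>{L - (L - 1) + 1..k}. wterm R k r)"
      using I L_def by simp
    moreover have "L - (L - 1) + 1 = 2" using kL by simp
    ultimately show ?thesis unfolding maj_def wsum_def using L_def by (simp add: numeral_2_eq_2)
  qed
qed

end

lemma maj_empty:
  assumes "\<not> nonempty R" shows "maj R = 0"
proof -
  have "d \<le> length R - 1 \<Longrightarrow> snd (maj_state R d) = 0" for d
  proof (induction d)
    case 0 then show ?case by simp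
  next
    case (Suc d)
    have "row R (length R - d) = {}" using assms Suc.prems unfolding nonempty_def by auto
    then show ?case using ms_suc[of R d] Suc by simp
  qed
  then show ?thesis unfolding maj_def by simp
qed

lemma cnt_pos: "valid R \<Longrightarrow> nonempty R \<Longrightarrow> 0 < cnt R"
proof -
  assume V: "valid R" and N: "nonempty R"
  obtain r where r: "r \<in> {1..length R}" "row R r \<noteq> {}" using N unfolding nonempty_def by blast
  have "finite (row R r)" using V r unfolding valid_def by auto
  then have "0 < card (row R r)" using r by auto
  moreover have "card (row R r) \<le> cnt R" unfolding cnt_def
    by (rule member_le_sum) (use r in auto)
  ultimately show ?thesis by simp
qed

primrec chg :: "nat \<Rightarrow> nat set list \<Rightarrow> nat" where
  "chg 0 R = 0"
| "chg (Suc f) R = (if nonempty R then wsum R (toprow R) + chg f (rem R (toprow R)) else 0)"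

lemma maj_chg: "valid R \<Longrightarrow> cnt R \<le> f \<Longrightarrow> maj R = chg f R"
proof (induction f arbitrary: R)
  case 0
  then have "\<not> nonempty R" using cnt_pos by fastforce
  then show ?case using maj_empty by simp
next
  case (Suc f)
  show ?case
  proof (cases "nonempty R")
    case True
    have "cnt (rem R (toprow R)) < cnt R" using cnt_rem[OF Suc.prems(1) True refl] .
    then have "maj (rem R (toprow R)) = chg f (rem R (toprow R))"
      using Suc.IH[OF valid_rem[OF Suc.prems(1) True refl]] Suc.prems(2) by simp
    then show ?thesis using maj_chain[OF Suc.prems(1) True refl] True by simp
  next
    case False
    then show ?thesis using maj_empty by simp
  qed
qed

definition cyc_next_g :: "(nat \<Rightarrow> nat) \<Rightarrow> nat set \<Rightarrow> nat \<Rightarrow> nat \<Rightarrow> nat" where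
  "cyc_next_g g S q i =
     (if \<exists>p\<in>S. q < p \<and> g p = i
      then (LEAST p. p \<in> S \<and> q < p \<and> g p = i)
      else (LEAST p. p \<in> S \<and> g p = i))"

primrec chain_g :: "(nat \<Rightarrow> nat) \<Rightarrow> nat set \<Rightarrow> nat \<Rightarrow> nat \<Rightarrow> nat" where
  "chain_g g S k 0 = (LEAST p. p \<in> S \<and> g p = k)"
| "chain_g g S k (Suc d) = cyc_next_g g S (chain_g g S k d) (k - Suc d)"

primrec aux_g :: "(nat \<Rightarrow> nat) \<Rightarrow> nat \<Rightarrow> nat set \<Rightarrow> nat" where
  "aux_g g 0 S = 0"
| "aux_g g (Suc f) S =
     (if S = {} then 0 else
      (let k = Max (g ` S);
           P = chain_g g S k ` {..<k};
           tau = map g (sorted_list_of_set P)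
       in perm_charge tau + aux_g g f (S - P)))"

lemma chain_eq: "charge_chain w S k d = chain_g ((!) w) S k d"
  by (induction d) (simp_all add: cyc_next_def cyc_next_g_def)

lemma aux_eq: "charge_aux w f S = aux_g ((!) w) f S"
proof (induction f arbitrary: S)
  case 0 then show ?case by simp
next
  case (Suc f)
  have "charge_chain w S k = chain_g ((!) w) S k" for k using chain_eq by blast
  then show ?case using Suc by (simp add: Let_def)
qed

locale keyed =
  fixes R0 :: "nat set list" and key :: "nat \<Rightarrow> nat \<Rightarrow> nat" and g :: "nat \<Rightarrow> nat"
  assumes V0: "valid R0"
    and Hk1: "\<And>r c. r \<in> {1..length R0} \<Longrightarrow> c \<in> row R0 r \<Longrightarrow> g (key r c) = r"
    and Hk2: "\<And>r c r' c'. r \<in> {1..length R0} \<Longrightarrow> c \<in> row R0 r \<Longrightarrow> r' \<in> {1..length R0} \<Longrightarrow> c' \<in> row R0 r' \<Longrightarrow>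
       key r c < key r' c' \<longleftrightarrow> (c < c' \<or> (c = c' \<and> r' < r))"
begin

definition keys :: "nat set list \<Rightarrow> nat set" where
  "keys R = {key r c | r c. r \<in> {1..length R} \<and> c \<in> row R r}"

definition sub :: "nat set list \<Rightarrow> bool" where
  "sub R \<longleftrightarrow> length R = length R0 \<and> (\<forall>r\<in>{1..length R0}. row R r \<subseteq> row R0 r)"

lemma key_inj:
  assumes "r \<in> {1..length R0}" "c \<in> row R0 r" "r' \<in> {1..length R0}" "c' \<in> row R0 r'"
    "key r c = key r' c'"
  shows "r = r' \<and> c = c'"
proof -
  have "\<not> key r c < key r' c'" "\<not> key r' c' < key r c" using assms(5) by auto
  then have "\<not> (c < c' \<or> (c = c' \<and> r' < r))" "\<not> (c' < c \<or> (c' = c \<and> r < r'))"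
    using Hk2[OF assms(1-4)] Hk2[OF assms(3,4,1,2)] by auto
  then show ?thesis by auto
qed

lemma keysE:
  assumes "sub R" "p \<in> keys R"
  obtains r c where "r \<in> {1..length R0}" "c \<in> row R r" "c \<in> row R0 r" "p = key r c" "g p = r"
proof -
  obtain r c where rc: "r \<in> {1..length R}" "c \<in> row R r" "p = key r c" using assms(2) unfolding keys_def by blast
  have "r \<in> {1..length R0}" "c \<in> row R0 r" using rc assms(1) unfolding sub_def by auto
  then show ?thesis using that rc Hk1 by blast
qed

lemma keysI: "r \<in> {1..length R} \<Longrightarrow> c \<in> row R r \<Longrightarrow> key r c \<in> keys R"
  unfolding keys_def by blast

lemma key_mono:
  assumes "sub R" "r \<in> {1..length R0}" "c \<in> row R r" "c' \<in> row R r" "c \<le> c'"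
  shows "key r c \<le> key r c'"
proof (cases "c = c'")
  case True then show ?thesis by simp
next
  case False
  have "c \<in> row R0 r" "c' \<in> row R0 r" using assms unfolding sub_def by auto
  then have "key r c < key r c'" using Hk2[of r c r c'] assms False by auto
  then show ?thesis by simp
qed

lemma keys_empty: "sub R \<Longrightarrow> keys R = {} \<longleftrightarrow> \<not> nonempty R"
  unfolding nonempty_def keys_def by blast

lemma Max_keys:
  assumes S: "sub R" and N: "nonempty R"
  shows "Max (g ` keys R) = toprow R"
proof -
  have "g ` keys R = {r\<in>{1..length R}. row R r \<noteq> {}}"
  proof
    show "g ` keys R \<subseteq> {r\<in>{1..length R}. row R r \<noteq> {}}"
    proof
      fix x assume "x \<in> g ` keys R"
      then obtain p where p: "p \<in> keys R" "x = g p" by blast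
      from keysE[OF S p(1)] show "x \<in> {r\<in>{1..length R}. row R r \<noteq> {}}"
        using p S unfolding sub_def by (metis (mono_tags, lifting) empty_iff mem_Collect_eq)
    qed
  next
    show "{r\<in>{1..length R}. row R r \<noteq> {}} \<subseteq> g ` keys R"
    proof
      fix r assume r: "r \<in> {r\<in>{1..length R}. row R r \<noteq> {}}"
      then obtain c where c: "c \<in> row R r" by blast
      have "key r c \<in> keys R" using keysI r c by blast
      moreover have "g (key r c) = r"
      proof -
        have rr: "r \<in> {1..length R0}" using r S unfolding sub_def by auto
        then have "c \<in> row R0 r" using c S unfolding sub_def by auto
        then show ?thesis using Hk1[OF rr] by simp
      qed
      ultimately show "r \<in> g ` keys R" by (metis image_eqI)
    qed
  qed
  then show ?thesis unfolding toprow_def by simp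
qed

context
  fixes R :: "nat set list" and k :: nat
  assumes S: "sub R" and V: "valid R" and N: "nonempty R" and K: "k = toprow R"
begin

lemma LR: "length R = length R0" using S unfolding sub_def by simp

lemma row_key_in: "1 \<le> r \<Longrightarrow> r \<le> k \<Longrightarrow> key r (col R k r) \<in> keys R \<and> g (key r (col R k r)) = r"
proof -
  assume r: "1 \<le> r" "r \<le> k"
  have rr: "r \<in> {1..length R}" using r top_props[OF V N K] by auto
  have c: "col R k r \<in> row R r" using col_in[OF V N K r] .
  have rr0: "r \<in> {1..length R0}" using rr LR by simp
  have c0: "col R k r \<in> row R0 r" using c S rr0 unfolding sub_def by auto
  show ?thesis using keysI[OF rr c] Hk1[OF rr0 c0] by simp
qed

lemma chain_key: "d < k \<Longrightarrow> chain_g g (keys R) k d = key (k - d) (col R k (k - d))"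
proof (induction d)
  case 0
  have k1: "1 \<le> k" using top_props[OF V N K] by simp
  have kk: "k - 0 = k" by simp
  have cm: "col R k k = Min (row R k)" unfolding col_def by simp
  note kin = row_key_in[OF k1 order_refl]
  show ?case unfolding chain_g.simps kk
  proof (rule Least_equality)
    show "key k (col R k k) \<in> keys R \<and> g (key k (col R k k)) = k" by (rule kin)
  next
    fix p assume p: "p \<in> keys R \<and> g p = k"
    then obtain r c where rc: "r \<in> {1..length R0}" "c \<in> row R r" "p = key r c" "g p = r"
      using keysE[OF S] by blast
    have "r = k" using rc p by simp
    have fin: "finite (row R k)" using fin_row[OF V N K k1] top_props[OF V N K] by simp
    have "col R k k \<le> c" unfolding cm using rc \<open>r = k\<close> Min_le[OF fin] by simp
    then show "key k (col R k k) \<le> p"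
      using key_mono[OF S, of k "col R k k" c] rc \<open>r = k\<close> col_in[OF V N K k1 order_refl] by simp
  qed
next
  case (Suc d)
  define i where "i = k - Suc d"
  have i1: "1 \<le> i" "i < k" using Suc.prems i_def by auto
  have kd: "k - d = Suc i" using Suc.prems i_def by simp
  have q: "chain_g g (keys R) k d = key (Suc i) (col R k (Suc i))" using Suc kd by simp
  define c1 where "c1 = col R k (Suc i)"
  define c0 where "c0 = col R k i"
  have c0n: "c0 = nfs (row R i) c1" unfolding c0_def c1_def using col_step[OF V N K, of "Suc i"] i1 by simp
  have iR: "i \<in> {1..length R0}" using i1 top_props[OF V N K] LR by auto
  have c1in: "c1 \<in> row R (Suc i)" unfolding c1_def using col_in[OF V N K] i1 by simp
  have c0in: "c0 \<in> row R i" unfolding c0_def using col_in[OF V N K] i1 by simp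
  have Si: "Suc i \<in> {1..length R0}" using i1 top_props[OF V N K] LR by auto
  have c1R0: "c1 \<in> row R0 (Suc i)" using c1in S Si unfolding sub_def by auto
  have sub_i: "row R i \<subseteq> row R0 i" using S iR unfolding sub_def by auto
  have lt_iff: "key (Suc i) c1 < key i c \<longleftrightarrow> c1 \<le> c" if c: "c \<in> row R i" for c
  proof -
    have cc: "c \<in> row R0 i" using sub_i c by auto
    show ?thesis using Hk2[OF Si c1R0 iR cc] by auto
  qed
  note k0 = row_key_in[OF i1(1) less_imp_le[OF i1(2)]]
  have gi: "p \<in> keys R \<Longrightarrow> g p = i \<Longrightarrow> \<exists>c\<in>row R i. p = key i c" for p
    using keysE[OF S] by metis
  have step: "chain_g g (keys R) k (Suc d) = cyc_next_g g (keys R) (key (Suc i) c1) i"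
    using q c1_def i_def by simp
  show ?case
  proof (cases "\<exists>p\<in>keys R. key (Suc i) c1 < p \<and> g p = i")
    case True
    then obtain p where p: "p \<in> keys R" "key (Suc i) c1 < p" "g p = i" by blast
    then obtain c where c: "c \<in> row R i" "p = key i c" using gi by blast
    have ex: "\<exists>c\<in>row R i. c1 \<le> c" using c p lt_iff by blast
    note np = nfs_prop1[OF ex]
    have "cyc_next_g g (keys R) (key (Suc i) c1) i = key i c0"
      unfolding cyc_next_g_def if_P[OF True]
    proof (rule Least_equality)
      show "key i c0 \<in> keys R \<and> key (Suc i) c1 < key i c0 \<and> g (key i c0) = i"
        using k0 lt_iff[OF c0in] np c0n c0_def by simp
    next
      fix y assume y: "y \<in> keys R \<and> key (Suc i) c1 < y \<and> g y = i"
      then obtain c' where c': "c' \<in> row R i" "y = key i c'" using gi by blast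
      then have "c1 \<le> c'" using y lt_iff by blast
      then have "c0 \<le> c'" using np c' c0n by simp
      then show "key i c0 \<le> y" using key_mono[OF S iR c0in c'(1)] c' by simp
    qed
    then show ?thesis using step i_def c0_def by simp
  next
    case False
    have nex: "\<not> (\<exists>c\<in>row R i. c1 \<le> c)"
    proof
      assume "\<exists>c\<in>row R i. c1 \<le> c"
      then obtain c where c: "c \<in> row R i" "c1 \<le> c" by blast
      have "key i c \<in> keys R" "g (key i c) = i" using keysI[of i R c] c iR LR Hk1[OF iR] sub_i by auto
      then show False using False lt_iff c by blast
    qed
    note np = nfs_prop2[OF nex]
    have "cyc_next_g g (keys R) (key (Suc i) c1) i = key i c0"
      unfolding cyc_next_g_def if_not_P[OF False]
    proof (rule Least_equality)
      show "key i c0 \<in> keys R \<and> g (key i c0) = i"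
        using k0 c0_def by simp
    next
      fix y assume y: "y \<in> keys R \<and> g y = i"
      then obtain c' where c': "c' \<in> row R i" "y = key i c'" using gi by blast
      then have "c0 \<le> c'" using np c0n by simp
      then show "key i c0 \<le> y" using key_mono[OF S iR c0in c'(1)] c' by simp
    qed
    then show ?thesis using step i_def c0_def by simp
  qed
qed

lemma P_eq: "chain_g g (keys R) k ` {..<k} = (\<lambda>r. key r (col R k r)) ` {1..k}"
proof
  show "chain_g g (keys R) k ` {..<k} \<subseteq> (\<lambda>r. key r (col R k r)) ` {1..k}"
  proof
    fix x assume "x \<in> chain_g g (keys R) k ` {..<k}"
    then obtain d where d: "d < k" "x = chain_g g (keys R) k d" by blast
    then have "x = key (k - d) (col R k (k - d))" using chain_key by simp
    moreover have "k - d \<in> {1..k}" using d by auto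
    ultimately show "x \<in> (\<lambda>r. key r (col R k r)) ` {1..k}" by blast
  qed
next
  show "(\<lambda>r. key r (col R k r)) ` {1..k} \<subseteq> chain_g g (keys R) k ` {..<k}"
  proof
    fix x assume "x \<in> (\<lambda>r. key r (col R k r)) ` {1..k}"
    then obtain r where r: "r \<in> {1..k}" "x = key r (col R k r)" by blast
    then have "x = chain_g g (keys R) k (k - r)" using chain_key[of "k - r"] by auto
    moreover have "k - r < k" using r by auto
    ultimately show "x \<in> chain_g g (keys R) k ` {..<k}" by blast
  qed
qed

lemma keyc_inj: "r \<in> {1..k} \<Longrightarrow> r' \<in> {1..k} \<Longrightarrow> key r (col R k r) = key r' (col R k r') \<Longrightarrow> r = r'"
proof -
  assume a: "r \<in> {1..k}" "r' \<in> {1..k}" "key r (col R k r) = key r' (col R k r')"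
  have "1 \<le> r" "r \<le> k" "1 \<le> r'" "r' \<le> k" using a(1,2) by auto
  then have "g (key r (col R k r)) = r" "g (key r' (col R k r')) = r'"
    using row_key_in[of r] row_key_in[of r'] by blast+
  then show "r = r'" using a(3) by metis
qed

lemma keys_rem: "keys R - (\<lambda>r. key r (col R k r)) ` {1..k} = keys (rem R k)"
proof
  show "keys R - (\<lambda>r. key r (col R k r)) ` {1..k} \<subseteq> keys (rem R k)"
  proof
    fix p assume p: "p \<in> keys R - (\<lambda>r. key r (col R k r)) ` {1..k}"
    then obtain r c where rc: "r \<in> {1..length R}" "c \<in> row R r" "p = key r c" unfolding keys_def by blast
    have "c \<in> row (rem R k) r"
    proof (cases "r \<le> k")
      case True
      then have "c \<noteq> col R k r" using p rc by auto
      then show ?thesis using row_rem[of r R k] rc True by auto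
    next
      case False
      then show ?thesis using row_rem[of r R k] rc by auto
    qed
    then show "p \<in> keys (rem R k)" using keysI[of r "rem R k" c] rc by simp
  qed
next
  show "keys (rem R k) \<subseteq> keys R - (\<lambda>r. key r (col R k r)) ` {1..k}"
  proof
    fix p assume p: "p \<in> keys (rem R k)"
    then obtain r c where rc: "r \<in> {1..length R}" "c \<in> row (rem R k) r" "p = key r c" unfolding keys_def by auto
    have cR: "c \<in> row R r" using rc row_rem[of r R k] by (auto split: if_splits)
    have inR: "p \<in> keys R" using keysI[OF rc(1) cR] rc by simp
    have "p \<notin> (\<lambda>r. key r (col R k r)) ` {1..k}"
    proof
      assume "p \<in> (\<lambda>r. key r (col R k r)) ` {1..k}"
      then obtain r' where r': "r' \<in> {1..k}" "p = key r' (col R k r')" by blast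
      have r'0: "r' \<in> {1..length R0}" using r' top_props[OF V N K] LR by auto
      have "col R k r' \<in> row R r'" using col_in[OF V N K, of r'] r' by auto
      then have c'0: "col R k r' \<in> row R0 r'" using S r'0 unfolding sub_def by auto
      have r0: "r \<in> {1..length R0}" using rc LR by simp
      have c0: "c \<in> row R0 r" using cR S r0 unfolding sub_def by auto
      have "r = r' \<and> c = col R k r'" using key_inj[OF r0 c0 r'0 c'0] rc r' by simp
      then show False using rc row_rem[of r R k] r' by auto
    qed
    then show "p \<in> keys R - (\<lambda>r. key r (col R k r)) ` {1..k}" using inR by blast
  qed
qed

lemma sub_rem: "sub (rem R k)"
  unfolding sub_def
proof (intro conjI ballI)
  show "length (rem R k) = length R0" using LR by simp
  fix r assume r: "r \<in> {1..length R0}"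
  then have "row (rem R k) r \<subseteq> row R r" using row_rem[of r R k] LR by auto
  also have "\<dots> \<subseteq> row R0 r" using S r unfolding sub_def by auto
  finally show "row (rem R k) r \<subseteq> row R0 r" .
qed

lemma perm_eq: "perm_charge (map g (sorted_list_of_set ((\<lambda>r. key r (col R k r)) ` {1..k}))) = wsum R k"
proof -
  define P where "P = (\<lambda>r. key r (col R k r)) ` {1..k}"
  define sl where "sl = sorted_list_of_set P"
  define tau where "tau = map g sl"
  have finP: "finite P" unfolding P_def by simp
  have injP: "inj_on (\<lambda>r. key r (col R k r)) {1..k}" using keyc_inj unfolding inj_on_def by blast
  have cardP: "card P = k" unfolding P_def using card_image[OF injP] by simp
  have lsl: "length sl = k" unfolding sl_def using cardP finP by simp
  have ltau: "length tau = k" unfolding tau_def using lsl by simp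
  have setsl: "set sl = P" unfolding sl_def using finP by simp
  have ssl: "sorted_wrt (<) sl" unfolding sl_def by (rule strict_sorted_list_of_set)
  have memP: "x \<in> P \<Longrightarrow> g x = i \<Longrightarrow> x = key i (col R k i)" for x i
    unfolding P_def using row_key_in by auto
  have cond: "(\<exists>a b. a < b \<and> b < length tau \<and> tau ! a = i \<and> tau ! b = Suc i) \<longleftrightarrow> col R k i < col R k (Suc i)"
    if i: "i \<in> {1..<k}" for i
  proof -
    define x where "x = key i (col R k i)"
    define y where "y = key (Suc i) (col R k (Suc i))"
    have i0: "i \<in> {1..length R0}" "Suc i \<in> {1..length R0}" using i top_props[OF V N K] LR by auto
    have xc: "col R k i \<in> row R0 i" using col_in[OF V N K, of i] i S i0 unfolding sub_def by auto
    have yc: "col R k (Suc i) \<in> row R0 (Suc i)" using col_in[OF V N K, of "Suc i"] i S i0 unfolding sub_def by auto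
    have xy: "x < y \<longleftrightarrow> col R k i < col R k (Suc i)" unfolding x_def y_def
      using Hk2[OF i0(1) xc i0(2) yc] by auto
    have xP: "x \<in> P" "g x = i" unfolding x_def P_def using row_key_in[of i] i by auto
    have yP: "y \<in> P" "g y = Suc i" unfolding y_def P_def using row_key_in[of "Suc i"] i by auto
    show ?thesis
    proof
      assume "\<exists>a b. a < b \<and> b < length tau \<and> tau ! a = i \<and> tau ! b = Suc i"
      then obtain a b where ab: "a < b" "b < length tau" "tau ! a = i" "tau ! b = Suc i" by blast
      have a: "sl ! a \<in> P" "g (sl ! a) = i" using ab setsl unfolding tau_def by auto
      have b: "sl ! b \<in> P" "g (sl ! b) = Suc i" using ab setsl unfolding tau_def by auto
      have "sl ! a = x" using memP[OF a] x_def by simp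
      moreover have "sl ! b = y" using memP[OF b] y_def by simp
      moreover have "sl ! a < sl ! b" using sorted_wrt_nth_less[OF ssl ab(1)] ab(2) unfolding tau_def by simp
      ultimately show "col R k i < col R k (Suc i)" using xy by simp
    next
      assume lt: "col R k i < col R k (Suc i)"
      obtain a where a: "a < length sl" "sl ! a = x" using xP setsl by (metis in_set_conv_nth)
      obtain b where b: "b < length sl" "sl ! b = y" using yP setsl by (metis in_set_conv_nth)
      have "a < b"
      proof (rule ccontr)
        assume "\<not> a < b"
        then have "b \<le> a" by simp
        then have "sl ! b \<le> sl ! a"
          using sorted_wrt_nth_less[OF ssl, of b a] a b by (cases "b = a") auto
        then show False using a b xy lt by simp
      qed
      moreover have "tau ! a = i" "tau ! b = Suc i" "b < length tau" using a b xP yP unfolding tau_def by auto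
      ultimately show "\<exists>a b. a < b \<and> b < length tau \<and> tau ! a = i \<and> tau ! b = Suc i" by blast
    qed
  qed
  have cond': "(if (\<exists>a b. a < b \<and> b < length tau \<and> tau ! a = i \<and> tau ! b = Suc i) then length tau - i else 0)
     = (if col R k i < col R k (Suc i) then k - i else 0)" if i: "i \<in> {1..<k}" for i
    using cond[OF i] ltau by simp
  have "perm_charge tau = (\<Sum>i\<in>{1..<length tau}. (if (\<exists>a b. a < b \<and> b < length tau \<and> tau ! a = i \<and> tau ! b = Suc i) then length tau - i else 0))"
    unfolding perm_charge_def by simp
  also have "\<dots> = (\<Sum>i\<in>{1..<k}. if col R k i < col R k (Suc i) then k - i else 0)"
    unfolding ltau[symmetric] by (rule sum.cong[OF refl]) (use cond' ltau in simp)
  also have "\<dots> = (\<Sum>i\<in>{1..<k}. wterm R k (Suc i))"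
    unfolding wterm_def by (intro sum.cong) auto
  also have "\<dots> = (\<Sum>r\<in>{2..k}. wterm R k r)"
  proof (rule sum.reindex_cong[symmetric])
    show "inj_on Suc {1..<k}" by simp
    show "{2..k} = Suc ` {1..<k}"
      by (simp add: image_Suc_atLeastLessThan atLeastLessThanSuc_atLeastAtMost numeral_2_eq_2)
  qed simp
  finally show ?thesis unfolding wsum_def tau_def sl_def P_def .
qed

end


lemma aux_chg: "sub R \<Longrightarrow> valid R \<Longrightarrow> aux_g g f (keys R) = chg f R"
proof (induction f arbitrary: R)
  case 0 then show ?case by simp
next
  case (Suc f)
  show ?case
  proof (cases "nonempty R")
    case True
    define k where "k = toprow R"
    have ne: "keys R \<noteq> {}" using keys_empty[OF Suc.prems(1)] True by simp
    have mx: "Max (g ` keys R) = k" using Max_keys[OF Suc.prems(1) True] k_def by simp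
    have P: "chain_g g (keys R) k ` {..<k} = (\<lambda>r. key r (col R k r)) ` {1..k}"
      using P_eq[OF Suc.prems(1,2) True k_def] .
    have pe: "perm_charge (map g (sorted_list_of_set ((\<lambda>r. key r (col R k r)) ` {1..k}))) = wsum R k"
      using perm_eq[OF Suc.prems(1,2) True k_def] .
    have kr: "keys R - (\<lambda>r. key r (col R k r)) ` {1..k} = keys (rem R k)"
      using keys_rem[OF Suc.prems(1,2) True k_def] .
    have IH: "aux_g g f (keys (rem R k)) = chg f (rem R k)"
      using Suc.IH[OF sub_rem[OF Suc.prems(1,2) True k_def] valid_rem[OF Suc.prems(2) True k_def]] .
    show ?thesis using ne mx P pe kr IH True k_def by (simp add: Let_def)
  next
    case False
    then show ?thesis using keys_empty[OF Suc.prems(1)] by simp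
  qed
qed

end

context keyed begin

lemma card_keys0: "card (keys R0) = cnt R0"
proof -
  have e: "keys R0 = (\<lambda>(r, c). key r c) ` (SIGMA r:{1..length R0}. row R0 r)"
    unfolding keys_def by force
  have inj: "inj_on (\<lambda>(r, c). key r c) (SIGMA r:{1..length R0}. row R0 r)"
  proof (rule inj_onI)
    fix x y assume x: "x \<in> (SIGMA r:{1..length R0}. row R0 r)" and y: "y \<in> (SIGMA r:{1..length R0}. row R0 r)"
      and e: "(\<lambda>(r, c). key r c) x = (\<lambda>(r, c). key r c) y"
    obtain r c where xr: "x = (r, c)" by (cases x)
    obtain r' c' where yr: "y = (r', c')" by (cases y)
    have "r \<in> {1..length R0}" "c \<in> row R0 r" "r' \<in> {1..length R0}" "c' \<in> row R0 r'" "key r c = key r' c'"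
      using x y e xr yr by auto
    then have "r = r' \<and> c = c'" by (rule key_inj)
    then show "x = y" using xr yr by simp
  qed
  have fin: "\<forall>r\<in>{1..length R0}. finite (row R0 r)" using V0 unfolding valid_def by auto
  show ?thesis unfolding e card_image[OF inj] cnt_def using fin by simp
qed

lemma aux_maj: "aux_g g (card (keys R0)) (keys R0) = maj R0"
proof -
  have s: "sub R0" unfolding sub_def by simp
  have "maj R0 = chg (cnt R0) R0" using maj_chg[OF V0] by simp
  then show ?thesis using aux_chg[OF s V0] card_keys0 by simp
qed

end

lemma key0_lt_aux:
  fixes a b c c' B :: nat
  assumes "a < B" "c < c'"
  shows "c * B + a < c' * B + b"
proof -
  have "c * B + a < c * B + B" using assms by simp
  also have "c * B + B = Suc c * B" by simp
  also have "Suc c * B \<le> c' * B" using assms(2) by (intro mult_le_mono1) simp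
  also have "c' * B \<le> c' * B + b" by simp
  finally show ?thesis .
qed

lemma key0_less:
  fixes a b c c' B :: nat
  assumes "a < B" "b < B"
  shows "c * B + a < c' * B + b \<longleftrightarrow> (c < c' \<or> (c = c' \<and> a < b))"
proof (cases "c < c'")
  case True
  then show ?thesis using key0_lt_aux[OF assms(1) True, of b] by blast
next
  case False
  show ?thesis
  proof (cases "c = c'")
    case True then show ?thesis by simp
  next
    case False': False
    then have "c' < c" using False by simp
    then have "c' * B + b < c * B + a" using key0_lt_aux[OF assms(2), of c' c a] by blast
    then show ?thesis using \<open>c' < c\<close> by simp
  qed
qed

lemma sorted_concat_blocks:
  fixes F :: "nat \<Rightarrow> nat list" and B :: nat
  assumes s: "\<And>j. sorted_wrt (<) (F j)"
    and bd: "\<And>j x. x \<in> set (F j) \<Longrightarrow> j * B \<le> x \<and> x < Suc j * B"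
  shows "sorted_wrt (<) (concat (map F [a..<b]))"
proof (induction b)
  case 0 then show ?case by simp
next
  case (Suc b)
  show ?case
  proof (cases "b < a")
    case True then show ?thesis by simp
  next
    case False
    then have e: "[a..<Suc b] = [a..<b] @ [b]" by simp
    have lt: "x < y" if x: "x \<in> set (concat (map F [a..<b]))" and y: "y \<in> set (F b)" for x y
    proof -
      obtain j where j: "j \<in> set [a..<b]" "x \<in> set (F j)" using x by (auto simp del: set_upt)
      have "x < Suc j * B" using bd[OF j(2)] by simp
      also have "Suc j * B \<le> b * B" using j(1) by (intro mult_le_mono1) simp
      also have "b * B \<le> y" using bd[OF y] by simp
      finally show "x < y" .
    qed
    have "sorted_wrt (<) (concat (map F [a..<b]) @ F b)"
      unfolding sorted_wrt_append using Suc.IH s lt by blast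
    then show ?thesis unfolding e by simp
  qed
qed

lemma length_filter_mono: "(\<And>x. P x \<Longrightarrow> Q x) \<Longrightarrow> length (filter P xs) \<le> length (filter Q xs)"
  by (induction xs) auto

definition key0 :: "nat \<Rightarrow> nat \<Rightarrow> nat \<Rightarrow> nat" where
  "key0 L r c = c * (L + 1) + (L - r)"

definition letter0 :: "nat \<Rightarrow> nat \<Rightarrow> nat" where
  "letter0 L x = L - x mod (L + 1)"

lemma letter0_key0: "1 \<le> r \<Longrightarrow> r \<le> L \<Longrightarrow> letter0 L (key0 L r c) = r"
proof -
  assume r: "1 \<le> r" "r \<le> L"
  have "(c * (L + 1) + (L - r)) mod (L + 1) = (L - r) mod (L + 1)" by (rule mod_mult_self3)
  also have "\<dots> = L - r" using r by simp
  finally show ?thesis unfolding letter0_def key0_def using r by simp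
qed

context
  fixes M :: "nat set list" and n :: nat
  assumes VM: "valid M" and RM: "\<forall>r\<in>{1..length M}. row M r \<subseteq> {1..n}"
begin

definition K0 :: "nat set" where
  "K0 = {key0 (length M) r c | r c. r \<in> {1..length M} \<and> c \<in> row M r}"

definition blk :: "nat \<Rightarrow> nat list" where
  "blk j = map (\<lambda>r. key0 (length M) r j) (filter (\<lambda>r. j \<in> row M r) (rev [1..<length M + 1]))"

definition xs0 :: "nat list" where
  "xs0 = concat (map blk [1..<n + 1])"

lemma map_letter: "map (letter0 (length M)) xs0 = col_word M n"
proof -
  have eq1: "map (letter0 (length M)) (blk j) = filter (\<lambda>r. j \<in> row M r) (rev [1..<length M + 1])" for j
  proof -
    have "map (letter0 (length M)) (blk j) = map (\<lambda>r. letter0 (length M) (key0 (length M) r j)) (filter (\<lambda>r. j \<in> row M r) (rev [1..<length M + 1]))"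
      unfolding blk_def by simp
    also have "\<dots> = map (\<lambda>r. r) (filter (\<lambda>r. j \<in> row M r) (rev [1..<length M + 1]))"
      by (rule map_cong[OF refl]) (auto simp: letter0_key0)
    finally show ?thesis by simp
  qed
  then have eqf: "(map (letter0 (length M)) \<circ> blk) = (\<lambda>j. filter (\<lambda>r. j \<in> row M r) (rev [1..<length M + 1]))"
    by (intro ext) (simp only: comp_def)
  show ?thesis unfolding xs0_def col_word_def map_concat map_map eqf ..
qed

lemma blk_sorted: "sorted_wrt (<) (blk j)"
proof -
  have "sorted_wrt (\<lambda>x y. key0 (length M) x j < key0 (length M) y j) (rev [1..<length M + 1])"
    unfolding sorted_wrt_rev
    by (rule sorted_wrt_mono_rel[OF _ sorted_wrt_upt]) (auto simp: key0_def)
  then have "sorted_wrt (\<lambda>x y. key0 (length M) x j < key0 (length M) y j) (filter (\<lambda>r. j \<in> row M r) (rev [1..<length M + 1]))"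
    by (rule sorted_wrt_filter)
  then show ?thesis unfolding blk_def sorted_wrt_map .
qed

lemma blk_bd: "x \<in> set (blk j) \<Longrightarrow> j * (length M + 1) \<le> x \<and> x < Suc j * (length M + 1)"
  unfolding blk_def key0_def by auto

lemma xs0_sorted: "sorted_wrt (<) xs0"
  unfolding xs0_def by (rule sorted_concat_blocks[OF blk_sorted blk_bd])

lemma set_xs0: "set xs0 = K0"
proof
  show "set xs0 \<subseteq> K0"
  proof
    fix x assume "x \<in> set xs0"
    then obtain j r where "r \<in> {1..length M}" "j \<in> row M r" "x = key0 (length M) r j"
      unfolding xs0_def blk_def by (auto simp del: upt_Suc simp: less_Suc_eq_le)
    then show "x \<in> K0" unfolding K0_def by blast
  qed
next
  show "K0 \<subseteq> set xs0"
  proof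
    fix x assume "x \<in> K0"
    then obtain r c where rc: "r \<in> {1..length M}" "c \<in> row M r" "x = key0 (length M) r c"
      unfolding K0_def by blast
    have "row M r \<subseteq> {1..n}" using RM rc(1) by blast
    then have "c \<in> {1..n}" using rc(2) by blast
    moreover have "x \<in> set (blk c)"
    proof -
      have "r \<in> set (filter (\<lambda>r. c \<in> row M r) (rev [1..<length M + 1]))" using rc by (auto simp del: upt_Suc)
      then show ?thesis unfolding blk_def rc(3) set_map by (rule imageI)
    qed
    ultimately show "x \<in> set xs0" unfolding xs0_def by (auto simp del: upt_Suc)
  qed
qed

lemma finK0: "finite K0" using set_xs0 by (metis List.finite_set)

lemma sl_eq: "sorted_list_of_set K0 = xs0"
proof (rule sorted_distinct_set_unique)
  show "sorted (sorted_list_of_set K0)" "distinct (sorted_list_of_set K0)" by simp_all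
  show "sorted xs0" "distinct xs0" using xs0_sorted strict_sorted_iff by blast+
  show "set (sorted_list_of_set K0) = set xs0" using set_xs0 finK0 by simp
qed

definition sl0 :: "nat list" where "sl0 = sorted_list_of_set K0"

definition idx :: "nat \<Rightarrow> nat" where "idx x = (THE p. p < length sl0 \<and> sl0 ! p = x)"

definition keyp :: "nat \<Rightarrow> nat \<Rightarrow> nat" where "keyp r c = idx (key0 (length M) r c)"

lemma sl0_props: "distinct sl0" "sorted_wrt (<) sl0" "set sl0 = K0"
  unfolding sl0_def using finK0 by (auto intro: strict_sorted_list_of_set)

lemma idx_props: "x \<in> K0 \<Longrightarrow> idx x < length sl0 \<and> sl0 ! idx x = x"
proof -
  assume x: "x \<in> K0"
  have "\<exists>!p. p < length sl0 \<and> sl0 ! p = x" using distinct_Ex1[OF sl0_props(1)] x sl0_props(3) by simp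
  then show ?thesis unfolding idx_def by (rule theI')
qed

lemma idx_nth: "p < length sl0 \<Longrightarrow> idx (sl0 ! p) = p"
  unfolding idx_def
proof (rule the_equality)
  assume "p < length sl0" then show "p < length sl0 \<and> sl0 ! p = sl0 ! p" by simp
next
  fix q assume "p < length sl0" "q < length sl0 \<and> sl0 ! q = sl0 ! p"
  then show "q = p" using nth_eq_iff_index_eq[OF sl0_props(1)] by blast
qed

lemma idx_less: "x \<in> K0 \<Longrightarrow> y \<in> K0 \<Longrightarrow> idx x < idx y \<longleftrightarrow> x < y"
proof -
  assume x: "x \<in> K0" and y: "y \<in> K0"
  note ix = idx_props[OF x] and iy = idx_props[OF y]
  show ?thesis
  proof
    assume "idx x < idx y"
    then have "sl0 ! idx x < sl0 ! idx y" using sorted_wrt_nth_less[OF sl0_props(2)] iy by blast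
    then show "x < y" using ix iy by simp
  next
    assume xy: "x < y"
    show "idx x < idx y"
    proof (rule ccontr)
      assume "\<not> idx x < idx y"
      then have "idx y \<le> idx x" by simp
      then have "sl0 ! idx y \<le> sl0 ! idx x"
        using sorted_wrt_nth_less[OF sl0_props(2), of "idx y" "idx x"] ix by (cases "idx y = idx x") auto
      then show False using ix iy xy by simp
    qed
  qed
qed

lemma w_eq: "col_word M n = map (letter0 (length M)) sl0"
  unfolding sl0_def sl_eq map_letter ..

lemma key0_in: "r \<in> {1..length M} \<Longrightarrow> c \<in> row M r \<Longrightarrow> key0 (length M) r c \<in> K0"
  unfolding K0_def by blast

lemma keyed_inst: "keyed M keyp ((!) (col_word M n))"
proof
  show "valid M" by (rule VM)
next
  fix r c assume r: "r \<in> {1..length M}" and c: "c \<in> row M r"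
  note kp = idx_props[OF key0_in[OF r c]]
  have "col_word M n ! keyp r c = letter0 (length M) (sl0 ! keyp r c)"
    unfolding w_eq keyp_def using kp by simp
  also have "\<dots> = r" unfolding keyp_def using kp letter0_key0 r by simp
  finally show "col_word M n ! keyp r c = r" .
next
  fix r c r' c' assume r: "r \<in> {1..length M}" and c: "c \<in> row M r"
    and r': "r' \<in> {1..length M}" and c': "c' \<in> row M r'"
  have "keyp r c < keyp r' c' \<longleftrightarrow> key0 (length M) r c < key0 (length M) r' c'"
    unfolding keyp_def by (rule idx_less[OF key0_in[OF r c] key0_in[OF r' c']])
  also have "\<dots> \<longleftrightarrow> (c < c' \<or> (c = c' \<and> length M - r < length M - r'))"
    unfolding key0_def by (rule key0_less) auto
  also have "\<dots> \<longleftrightarrow> (c < c' \<or> (c = c' \<and> r' < r))" using r r' by auto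
  finally show "keyp r c < keyp r' c' \<longleftrightarrow> (c < c' \<or> (c = c' \<and> r' < r))" .
qed

lemma keys_eq: "keyed.keys keyp M = {..<length (col_word M n)}"
proof
  show "keyed.keys keyp M \<subseteq> {..<length (col_word M n)}"
  proof
    fix p assume "p \<in> keyed.keys keyp M"
    then obtain r c where rc: "r \<in> {1..length M}" "c \<in> row M r" "p = keyp r c"
      unfolding keyed.keys_def[OF keyed_inst] by blast
    then show "p \<in> {..<length (col_word M n)}"
      using idx_props[OF key0_in[OF rc(1,2)]] unfolding w_eq keyp_def by simp
  qed
next
  show "{..<length (col_word M n)} \<subseteq> keyed.keys keyp M"
  proof
    fix p assume "p \<in> {..<length (col_word M n)}"
    then have p: "p < length sl0" unfolding w_eq by simp
    then have "sl0 ! p \<in> K0" using sl0_props(3) by (metis nth_mem)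
    then obtain r c where rc: "r \<in> {1..length M}" "c \<in> row M r" "sl0 ! p = key0 (length M) r c"
      unfolding K0_def by blast
    have "p = keyp r c" unfolding keyp_def using idx_nth[OF p] rc(3) by simp
    then show "p \<in> keyed.keys keyp M" unfolding keyed.keys_def[OF keyed_inst] using rc by blast
  qed
qed

lemma charge_maj: "charge (col_word M n) = maj M"
proof -
  have "charge (col_word M n) = aux_g ((!) (col_word M n)) (length (col_word M n)) {..<length (col_word M n)}"
    unfolding charge_def aux_eq ..
  also have "\<dots> = aux_g ((!) (col_word M n)) (card (keyed.keys keyp M)) (keyed.keys keyp M)"
    unfolding keys_eq by simp
  also have "\<dots> = maj M" by (rule keyed.aux_maj[OF keyed_inst])
  finally show ?thesis .
qed

end

lemma MLQ_valid:
  assumes "M \<in> MLQ lam n"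
  shows "valid M" "\<forall>r\<in>{1..length M}. row M r \<subseteq> {1..n}"
proof -
  have L: "length M = first_part lam" and H: "\<forall>r\<in>{1..first_part lam}. M ! (r - 1) \<subseteq> {1..n} \<and> card (M ! (r - 1)) = conj_part lam r"
    using assms unfolding MLQ_def by auto
  show rows: "\<forall>r\<in>{1..length M}. row M r \<subseteq> {1..n}" using L H unfolding row_def by auto
  show "valid M" unfolding valid_def
  proof (intro conjI allI impI ballI)
    fix r assume "r \<in> {1..length M}"
    then have "row M r \<subseteq> {1..n}" using rows by blast
    then show "finite (row M r)" using finite_subset by blast
  next
    fix r assume r: "1 \<le> r" "r < length M"
    have c1: "card (row M (Suc r)) = conj_part lam (Suc r)" using bspec[OF H, of "Suc r"] L r unfolding row_def by simp
    have c2: "card (row M r) = conj_part lam r" using bspec[OF H, of r] L r unfolding row_def by simp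
    have "conj_part lam (Suc r) \<le> conj_part lam r"
      unfolding conj_part_def by (rule length_filter_mono) simp
    then show "card (row M (Suc r)) \<le> card (row M r)" using c1 c2 by simp
  qed
qed

theorem theorem3p17:
  fixes lam :: "nat list" and n :: nat and M :: "nat set list"
  assumes "is_partition lam"
    and "length lam \<le> n"
    and "M \<in> MLQ lam n"
  shows "maj M = charge (col_word M n)"
  using charge_maj[OF MLQ_valid[OF assms(3)]] by simp

end
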